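(* Let $k$ be an algebraically closed field of characteristic zero, $n\ge1$, $q\in k$ a primitive $2n$-th root of unity. Let $H_{4n}^*$ be the Hopf algebra generated by $\alpha,\eta$ with relations $\alpha^{2n}=1$, $\eta^2=1-\alpha^2$, $\alpha\eta=-\eta\alpha$, and $\Delta(\alpha)=\alpha\otimes\alpha$, $\Delta(\eta)=\eta\otimes1+\alpha\otimes\eta$, $\epsilon(\alpha)=1$, $\epsilon(\eta)=0$, $S(\alpha)=\alpha^{-1}$, $S(\eta)=-\alpha^{-1}\eta$. Let $\mathfrak wH_{4n}^*$ be the weak Hopf algebra generated by $G,X$ with relations $G^{2n+1}=G$, $GX=-XG$, $X^2=1-G^2$, and $\Delta(G)=G\otimes G$, $\Delta(X)=X\otimes1+G\otimes X$, $\epsilon(G)=1$, $\epsilon(X)=0$, $T(G)=G^{2n-1}$, $T(X)=-G^{2n-1}X$. Let $J=G^{2n}$, $\mathfrak w_1=\mathfrak wH_{4n}^*J$, $\mathfrak w_2=\mathfrak wH_{4n}^*(1-J)$. Then $\mathfrak wH_{4n}^*=\mathfrak w_1\oplus\mathfrak w_2$ as a direct sum of two-sided ideals; moreover $\mathfrak w_1$ (with unit $J$ and the restricted comultiplication and counit) is isomorphic to $H_{4n}^*$ as Hopf algebras, and $\mathfrak w_2\cong k[y]/(y^2-1)$ as algebras.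
   Context: $H_{4n}^*$ here is the dual of the Hopf algebra $H_{4n}$ (generated by $z,x$, $z^{2n}=1$, $zx=qxz$, $x^2=0$) with the parameter normalized to $a=1$, presented by the stated generators and relations. *)

theory Defs
  imports "HOL-Computational_Algebra.Polynomial"
begin

text \<open>Elements of the free algebra k<a,b> are finitely supported coefficient functions on
  words over the two-letter alphabet bool.  Letter False is the first generator
  (G, resp. alpha), letter True is the second generator (X, resp. eta).\<close>

type_synonym 'k fa = "bool list \<Rightarrow> 'k"
type_synonym 'k fa2 = "bool list \<times> bool list \<Rightarrow> 'k"

definition fa_carrier :: "('k::zero) fa set" where
  "fa_carrier = {p. finite {w. p w \<noteq> 0}}"

definition fzero :: "('k::zero) fa" where "fzero = (\<lambda>w. 0)"
definition fone :: "('k::{zero,one}) fa" where "fone = (\<lambda>w. if w = [] then 1 else 0)"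
definition fbasis :: "bool list \<Rightarrow> ('k::{zero,one}) fa" where
  "fbasis u = (\<lambda>w. if w = u then 1 else 0)"
definition fgen :: "bool \<Rightarrow> ('k::{zero,one}) fa" where "fgen b = fbasis [b]"
definition fadd :: "('k::plus) fa \<Rightarrow> 'k fa \<Rightarrow> 'k fa" where "fadd p q = (\<lambda>w. p w + q w)"
definition fsub :: "('k::minus) fa \<Rightarrow> 'k fa \<Rightarrow> 'k fa" where "fsub p q = (\<lambda>w. p w - q w)"
definition fscale :: "'k::times \<Rightarrow> 'k fa \<Rightarrow> 'k fa" where "fscale c p = (\<lambda>w. c * p w)"

definition fmul :: "('k::comm_ring_1) fa \<Rightarrow> 'k fa \<Rightarrow> 'k fa" where
  "fmul p q = (\<lambda>w. \<Sum>i\<le>length w. p (take i w) * q (drop i w))"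

primrec fpow :: "('k::comm_ring_1) fa \<Rightarrow> nat \<Rightarrow> 'k fa" where
  "fpow p 0 = fone"
| "fpow p (Suc m) = fmul p (fpow p m)"

abbreviation fG :: "('k::comm_ring_1) fa" where "fG \<equiv> fgen False"
abbreviation fX :: "('k::comm_ring_1) fa" where "fX \<equiv> fgen True"

inductive_set fideal :: "('k::comm_ring_1) fa set \<Rightarrow> 'k fa set" for R where
  gen: "r \<in> R \<Longrightarrow> r \<in> fideal R"
| zero: "fzero \<in> fideal R"
| add: "x \<in> fideal R \<Longrightarrow> y \<in> fideal R \<Longrightarrow> fadd x y \<in> fideal R"
| mult: "x \<in> fideal R \<Longrightarrow> a \<in> fa_carrier \<Longrightarrow> b \<in> fa_carrier \<Longrightarrow> fmul a (fmul x b) \<in> fideal R"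

definition wrels :: "nat \<Rightarrow> ('k::comm_ring_1) fa set" where
  "wrels n = {fsub (fpow fG (2*n+1)) fG,
              fadd (fmul fG fX) (fmul fX fG),
              fsub (fmul fX fX) (fsub fone (fmul fG fG))}"

definition hrels :: "nat \<Rightarrow> ('k::comm_ring_1) fa set" where
  "hrels n = {fsub (fpow fG (2*n)) fone,
              fsub (fmul fX fX) (fsub fone (fmul fG fG)),
              fadd (fmul fG fX) (fmul fX fG)}"

definition wI :: "nat \<Rightarrow> ('k::comm_ring_1) fa set" where "wI n = fideal (wrels n)"
definition hI :: "nat \<Rightarrow> ('k::comm_ring_1) fa set" where "hI n = fideal (hrels n)"

definition fJ :: "nat \<Rightarrow> ('k::comm_ring_1) fa" where "fJ n = fpow fG (2*n)"
definition W1 :: "nat \<Rightarrow> ('k::comm_ring_1) fa set" where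
  "W1 n = {fmul p (fJ n) | p. p \<in> fa_carrier}"
definition W2 :: "nat \<Rightarrow> ('k::comm_ring_1) fa set" where
  "W2 n = {fmul p (fsub fone (fJ n)) | p. p \<in> fa_carrier}"

definition in_mod :: "('k::comm_ring_1) fa set \<Rightarrow> 'k fa set \<Rightarrow> 'k fa \<Rightarrow> bool" where
  "in_mod I S x \<longleftrightarrow> (\<exists>s\<in>S. fsub x s \<in> I)"

definition t_carrier :: "('k::zero) fa2 set" where
  "t_carrier = {t. finite {uv. t uv \<noteq> 0}}"
definition tzero :: "('k::zero) fa2" where "tzero = (\<lambda>uv. 0)"
definition tone :: "('k::{zero,one}) fa2" where
  "tone = (\<lambda>(u,v). if u = [] \<and> v = [] then 1 else 0)"
definition tadd :: "('k::plus) fa2 \<Rightarrow> 'k fa2 \<Rightarrow> 'k fa2" where "tadd s t = (\<lambda>uv. s uv + t uv)"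
definition tsub :: "('k::minus) fa2 \<Rightarrow> 'k fa2 \<Rightarrow> 'k fa2" where "tsub s t = (\<lambda>uv. s uv - t uv)"
definition tmul :: "('k::comm_ring_1) fa2 \<Rightarrow> 'k fa2 \<Rightarrow> 'k fa2" where
  "tmul s t = (\<lambda>(u,v). \<Sum>i\<le>length u. \<Sum>j\<le>length v.
                 s (take i u, take j v) * t (drop i u, drop j v))"
definition ftensor :: "('k::times) fa \<Rightarrow> 'k fa \<Rightarrow> 'k fa2" where
  "ftensor p q = (\<lambda>(u,v). p u * q v)"

text \<open>I (x) F + F (x) I, the kernel of F (x) F \<rightarrow> (F/I) (x) (F/I).\<close>
inductive_set tideal :: "('k::comm_ring_1) fa set \<Rightarrow> 'k fa2 set" for I where
  zero: "tzero \<in> tideal I"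
| left: "a \<in> I \<Longrightarrow> b \<in> fa_carrier \<Longrightarrow> ftensor a b \<in> tideal I"
| right: "a \<in> fa_carrier \<Longrightarrow> b \<in> I \<Longrightarrow> ftensor a b \<in> tideal I"
| add: "s \<in> tideal I \<Longrightarrow> t \<in> tideal I \<Longrightarrow> tadd s t \<in> tideal I"

text \<open>Comultiplication on generators (same formulas for both algebras):
  Delta(G) = G (x) G, Delta(X) = X (x) 1 + G (x) X, extended multiplicatively.\<close>
definition delta_gen :: "bool \<Rightarrow> ('k::comm_ring_1) fa2" where
  "delta_gen b = (if b then tadd (ftensor fX fone) (ftensor fG fX) else ftensor fG fG)"

primrec delta_word :: "bool list \<Rightarrow> ('k::comm_ring_1) fa2" where
  "delta_word [] = tone"
| "delta_word (b # w) = tmul (delta_gen b) (delta_word w)"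

definition fDelta :: "('k::comm_ring_1) fa \<Rightarrow> 'k fa2" where
  "fDelta p = (\<lambda>uv. \<Sum>w\<in>{w. p w \<noteq> 0}. p w * delta_word w uv)"

definition feps :: "('k::comm_ring_1) fa \<Rightarrow> 'k" where
  "feps p = (\<Sum>w\<in>{w. p w \<noteq> 0}. p w * prod_list (map (\<lambda>b. if b then 0 else 1) w))"

definition tensor_map :: "(('k::comm_ring_1) fa \<Rightarrow> 'k fa) \<Rightarrow> 'k fa2 \<Rightarrow> 'k fa2" where
  "tensor_map \<phi> t = (\<lambda>uv. \<Sum>(u,v)\<in>{uv. t uv \<noteq> 0}.
                         t (u,v) * ftensor (\<phi> (fbasis u)) (\<phi> (fbasis v)) uv)"

definition fa_linear :: "(('k::comm_ring_1) fa \<Rightarrow> 'b) \<Rightarrow> ('b \<Rightarrow> 'b \<Rightarrow> 'b) \<Rightarrow> ('k \<Rightarrow> 'b \<Rightarrow> 'b) \<Rightarrow> bool" where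
  "fa_linear \<phi> add_op scale_op \<longleftrightarrow>
     (\<forall>p\<in>fa_carrier. \<forall>q\<in>fa_carrier. \<phi> (fadd p q) = add_op (\<phi> p) (\<phi> q)) \<and>
     (\<forall>p\<in>fa_carrier. \<forall>c. \<phi> (fscale c p) = scale_op c (\<phi> p))"

definition alg_closed_field :: "'k::field itself \<Rightarrow> bool" where
  "alg_closed_field _ \<longleftrightarrow> (\<forall>p :: 'k poly. degree p \<ge> 1 \<longrightarrow> (\<exists>x. poly p x = 0))"

end

theory Submission
  imports Defs
begin

abbreviation supp :: "('k::zero) fa \<Rightarrow> bool list set" where "supp p \<equiv> {w. p w \<noteq> 0}"

lemma fmul_basis_left:
  "fmul (fbasis u) p w = (if take (length u) w = u then p (drop (length u) w) else 0)"
proof -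
  have "fmul (fbasis u) p w = (\<Sum>i\<le>length w. if i = length u then (if take (length u) w = u then p (drop (length u) w) else 0) else 0)"
    unfolding fmul_def fbasis_def
    by (rule sum.cong) (auto)
  also have "\<dots> = (if take (length u) w = u then p (drop (length u) w) else 0)"
    by (auto simp: sum.delta)
  finally show ?thesis .
qed

lemma fmul_basis_basis: "fmul (fbasis u) (fbasis v) = (fbasis (u @ v) :: 'k::comm_ring_1 fa)"
proof
  fix w show "fmul (fbasis u) (fbasis v) w = (fbasis (u @ v) :: 'k fa) w"
    unfolding fmul_basis_left by (auto simp: fbasis_def append_eq_conv_conj) (metis append_take_drop_id)
qed

lemma fmul_fbasis_Cons: "fmul (fgen b) (fbasis v) = (fbasis (b # v) :: 'k::comm_ring_1 fa)"
  by (simp add: fgen_def fmul_basis_basis)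

lemma fone_basis: "fone = fbasis []" by (simp add: fone_def fbasis_def fun_eq_iff)

lemma fmul_one_left[simp]: "fmul fone p = p"
  by (simp add: fone_basis fmul_basis_left fun_eq_iff)

lemma fmul_one_right[simp]: "fmul p fone = p"
proof
  fix w
  have "fmul p fone w = (\<Sum>i\<le>length w. if i = length w then p w else 0)"
    unfolding fmul_def fone_def by (rule sum.cong) auto
  then show "fmul p fone w = p w" by simp
qed

lemma fmul_assoc: "fmul (fmul p q) r = fmul p (fmul q r)"
proof
  fix w :: "bool list"
  define n where "n = length w"
  define F where "F = (\<lambda>j i. p (take j w) * q (take (i-j) (drop j w)) * r (drop i w))"
  have "fmul (fmul p q) r w = (\<Sum>i\<le>n. \<Sum>j\<le>i. F j i)"
    unfolding fmul_def F_def n_def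
    by (auto simp: sum_distrib_right min_def drop_take intro!: sum.cong)
  also have "\<dots> = (\<Sum>(i,j)\<in>Sigma {..n} (\<lambda>i. {..i}). F j i)"
    by (simp add: sum.Sigma)
  also have "\<dots> = (\<Sum>(j,l)\<in>Sigma {..n} (\<lambda>j. {..n-j}). F j (j+l))"
    by (rule sum.reindex_bij_witness[where i="\<lambda>(j,l). (j+l, j)" and j="\<lambda>(i,j). (j, i-j)"]) auto
  also have "\<dots> = (\<Sum>j\<le>n. \<Sum>l\<le>n-j. F j (j+l))"
    by (simp add: sum.Sigma)
  also have "\<dots> = fmul p (fmul q r) w"
    unfolding fmul_def F_def n_def
    by (auto simp: sum_distrib_left mult.assoc add.commute intro!: sum.cong)
  finally show "fmul (fmul p q) r w = fmul p (fmul q r) w" .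
qed


lemma fmul_fadd_left: "fmul (fadd p q) r = fadd (fmul p r) (fmul q r)"
  by (simp add: fun_eq_iff fmul_def fadd_def distrib_right sum.distrib)
lemma fmul_fadd_right: "fmul r (fadd p q) = fadd (fmul r p) (fmul r q)"
  by (simp add: fun_eq_iff fmul_def fadd_def distrib_left sum.distrib)
lemma fmul_fsub_left: "fmul (fsub p q) r = fsub (fmul p r) (fmul q r)"
  by (simp add: fun_eq_iff fmul_def fsub_def left_diff_distrib sum_subtractf)
lemma fmul_fsub_right: "fmul r (fsub p q) = fsub (fmul r p) (fmul r q)"
  by (simp add: fun_eq_iff fmul_def fsub_def right_diff_distrib sum_subtractf)
lemma fmul_fscale_left: "fmul (fscale c p) r = fscale c (fmul p r)"
  by (simp add: fun_eq_iff fmul_def fscale_def sum_distrib_left mult.assoc)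
lemma fmul_fscale_right: "fmul r (fscale c p) = fscale c (fmul r p)"
  by (simp add: fun_eq_iff fmul_def fscale_def sum_distrib_left mult.left_commute)
lemmas dist = fmul_fadd_left fmul_fadd_right fmul_fsub_left fmul_fsub_right fmul_fscale_left fmul_fscale_right

lemma fmul_fzero_left[simp]: "fmul fzero r = fzero"
  by (simp add: fun_eq_iff fmul_def fzero_def)
lemma fmul_fzero_right[simp]: "fmul r fzero = fzero"
  by (simp add: fun_eq_iff fmul_def fzero_def)

lemma fpow_G: "fpow fG m = (fbasis (replicate m False) :: 'k::comm_ring_1 fa)"
  by (induction m) (simp_all add: fone_basis fmul_fbasis_Cons)

lemma fpow_G': "fpow (fbasis [False]) m = (fbasis (replicate m False) :: 'k::comm_ring_1 fa)"
  using fpow_G[of m] by (simp add: fgen_def)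

lemma carrier_fbasis[simp]: "(fbasis u :: 'k::comm_ring_1 fa) \<in> fa_carrier"
proof -
  have "{w. (fbasis u :: 'k fa) w \<noteq> 0} \<subseteq> {u}" by (auto simp: fbasis_def)
  then show ?thesis unfolding fa_carrier_def by (auto intro: finite_subset)
qed
lemma carrier_fone[simp]: "(fone :: 'k::comm_ring_1 fa) \<in> fa_carrier"
  by (simp add: fone_basis)
lemma carrier_fgen[simp]: "(fgen b :: 'k::comm_ring_1 fa) \<in> fa_carrier"
  by (simp add: fgen_def)
lemma carrier_fzero[simp]: "(fzero :: 'k::comm_ring_1 fa) \<in> fa_carrier"
  by (simp add: fa_carrier_def fzero_def)
lemma carrier_fadd[simp]: "p \<in> fa_carrier \<Longrightarrow> q \<in> fa_carrier \<Longrightarrow> (fadd p q :: 'k::comm_ring_1 fa) \<in> fa_carrier"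
  unfolding fa_carrier_def fadd_def
  by (auto intro: finite_subset[of _ "supp p \<union> supp q"])
lemma carrier_fsub[simp]: "p \<in> fa_carrier \<Longrightarrow> q \<in> fa_carrier \<Longrightarrow> (fsub p q :: 'k::comm_ring_1 fa) \<in> fa_carrier"
  unfolding fa_carrier_def fsub_def
  by (auto intro: finite_subset[of _ "supp p \<union> supp q"])
lemma carrier_fscale[simp]: "p \<in> fa_carrier \<Longrightarrow> (fscale c p :: 'k::comm_ring_1 fa) \<in> fa_carrier"
  unfolding fa_carrier_def fscale_def
  by (auto intro: finite_subset[of _ "supp p"])
lemma carrier_fmul[simp]:
  assumes "p \<in> fa_carrier" "q \<in> fa_carrier"
  shows "(fmul p q :: 'k::comm_ring_1 fa) \<in> fa_carrier"
proof -
  have "supp (fmul p q) \<subseteq> (\<lambda>(u,v). u @ v) ` (supp p \<times> supp q)"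
  proof
    fix w assume "w \<in> supp (fmul p q)"
    then obtain i where "p (take i w) * q (drop i w) \<noteq> 0"
      unfolding fmul_def by (auto elim: sum.not_neutral_contains_not_neutral)
    then show "w \<in> (\<lambda>(u,v). u @ v) ` (supp p \<times> supp q)"
      by (auto intro!: image_eqI[of _ _ "(take i w, drop i w)"])
  qed
  then show ?thesis using assms unfolding fa_carrier_def by (auto intro: finite_subset)
qed
lemma carrier_fpow[simp]: "p \<in> fa_carrier \<Longrightarrow> fpow p m \<in> fa_carrier"
  by (induction m) auto

lemma carrier_induct[consumes 1, case_names zero add scale basis]:
  assumes p: "(p :: 'k::comm_ring_1 fa) \<in> fa_carrier"
    and Z: "P fzero"
    and A: "\<And>p q. p \<in> fa_carrier \<Longrightarrow> q \<in> fa_carrier \<Longrightarrow> P p \<Longrightarrow> P q \<Longrightarrow> P (fadd p q)"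
    and S: "\<And>c p. p \<in> fa_carrier \<Longrightarrow> P p \<Longrightarrow> P (fscale c p)"
    and B: "\<And>w. P (fbasis w)"
  shows "P p"
proof -
  have "\<forall>p. supp p \<subseteq> F \<longrightarrow> P p" if "finite F" for F
    using that
  proof (induction F rule: finite_induct)
    case empty
    then show ?case using Z by (auto simp: fzero_def fun_eq_iff)
  next
    case (insert x F)
    show ?case
    proof (intro allI impI)
      fix p :: "'k fa" assume sp: "supp p \<subseteq> insert x F"
      define p' where "p' = p(x := 0)"
      have sp': "supp p' \<subseteq> F" using sp insert(2) by (auto simp: p'_def)
      have cp': "p' \<in> fa_carrier" using sp' insert(1) unfolding fa_carrier_def by (auto intro: finite_subset)
      have eq: "p = fadd p' (fscale (p x) (fbasis x))"
        by (auto simp: fun_eq_iff fadd_def fscale_def fbasis_def p'_def)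
      show "P p"
        by (subst eq, rule A) (use cp' sp' insert(3) S B in auto)
    qed
  qed
  then show ?thesis using p unfolding fa_carrier_def by blast
qed


lemma fscale_as_mul: "fscale c p = fmul (fscale c fone) p"
  by (simp add: fmul_fscale_left)

locale idl =
  fixes R :: "('k::comm_ring_1) fa set"
  assumes Rc: "R \<subseteq> fa_carrier"
begin

lemma carrier: "x \<in> fideal R \<Longrightarrow> x \<in> fa_carrier"
  by (induction rule: fideal.induct) (use Rc in auto)

lemma gen: "r \<in> R \<Longrightarrow> r \<in> fideal R" by (rule fideal.gen)
lemma zero: "fzero \<in> fideal R" by (rule fideal.zero)
lemma add: "x \<in> fideal R \<Longrightarrow> y \<in> fideal R \<Longrightarrow> fadd x y \<in> fideal R" by (rule fideal.add)
lemma mult: "x \<in> fideal R \<Longrightarrow> a \<in> fa_carrier \<Longrightarrow> b \<in> fa_carrier \<Longrightarrow> fmul a (fmul x b) \<in> fideal R"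
  by (rule fideal.mult)
lemma lmul: "x \<in> fideal R \<Longrightarrow> a \<in> fa_carrier \<Longrightarrow> fmul a x \<in> fideal R"
  using mult[of x a fone] by simp
lemma rmul: "x \<in> fideal R \<Longrightarrow> b \<in> fa_carrier \<Longrightarrow> fmul x b \<in> fideal R"
  using mult[of x fone b] by simp
lemma scale: "x \<in> fideal R \<Longrightarrow> fscale c x \<in> fideal R"
  by (subst fscale_as_mul) (rule lmul, auto)
lemma sub: "x \<in> fideal R \<Longrightarrow> y \<in> fideal R \<Longrightarrow> fsub x y \<in> fideal R"
proof -
  assume "x \<in> fideal R" "y \<in> fideal R"
  then have "fadd x (fscale (-1) y) \<in> fideal R" by (intro add scale)
  moreover have "fadd x (fscale (-1) y) = fsub x y" by (simp add: fun_eq_iff fadd_def fscale_def fsub_def)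
  ultimately show ?thesis by simp
qed
lemma neg: "x \<in> fideal R \<Longrightarrow> fsub fzero x \<in> fideal R"
  by (rule sub[OF zero])
lemma eqI: "x \<in> fideal R \<Longrightarrow> x = y \<Longrightarrow> y \<in> fideal R" by simp

end

lemma wrels_carrier: "wrels n \<subseteq> (fa_carrier :: 'k::comm_ring_1 fa set)"
  by (auto simp: wrels_def)
lemma hrels_carrier: "hrels n \<subseteq> (fa_carrier :: 'k::comm_ring_1 fa set)"
  by (auto simp: hrels_def)

interpretation W: idl "wrels n" by (rule idl.intro, rule wrels_carrier)
interpretation H: idl "hrels n" by (rule idl.intro, rule hrels_carrier)

abbreviation "B \<equiv> fbasis"
abbreviation "Fs m \<equiv> replicate m False"

lemma fJ_basis: "fJ n = B (Fs (2*n))" by (simp add: fJ_def fpow_G)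

lemma wrels_basis:
  "fsub (B (Fs (2*n+1))) (B [False]) \<in> (wrels n :: 'k::comm_ring_1 fa set)"
  "fadd (B [False, True]) (B [True, False]) \<in> (wrels n :: 'k fa set)"
  "fsub (B [True,True]) (fsub fone (B [False,False])) \<in> (wrels n :: 'k fa set)"
  by (simp_all add: wrels_def fpow_G fgen_def fmul_basis_basis fpow_G')

lemma hrels_basis:
  "fsub (B (Fs (2*n))) fone \<in> (hrels n :: 'k::comm_ring_1 fa set)"
  "fadd (B [False, True]) (B [True, False]) \<in> (hrels n :: 'k fa set)"
  "fsub (B [True,True]) (fsub fone (B [False,False])) \<in> (hrels n :: 'k fa set)"
  by (simp_all add: hrels_def fpow_G fgen_def fmul_basis_basis fpow_G')


lemma XJ_comm: "fsub (B (True # Fs (2*m))) (B (Fs (2*m) @ [True])) \<in> fideal (wrels n :: 'k::comm_ring_1 fa set)"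
proof (induction m)
  case 0
  then show ?case by (intro W.eqI[OF W.zero]) (simp add: fun_eq_iff fsub_def fzero_def)
next
  case (Suc m)
  define r2 :: "'k fa" where "r2 = fadd (B [False, True]) (B [True, False])"
  have r2: "r2 \<in> fideal (wrels n)" unfolding r2_def by (intro W.gen wrels_basis)
  let ?d = "fsub (B (True # Fs (2*m))) (B (Fs (2*m) @ [True])) :: 'k fa"
  have "fadd (fsub (fmul r2 (B (False # Fs (2*m)))) (fmul (B [False]) (fmul r2 (B (Fs (2*m))))))
          (fmul (B [False,False]) ?d) \<in> fideal (wrels n)"
    by (intro W.add W.sub W.lmul W.rmul r2 Suc) auto
  moreover have "fadd (fsub (fmul r2 (B (False # Fs (2*m)))) (fmul (B [False]) (fmul r2 (B (Fs (2*m))))))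
          (fmul (B [False,False]) ?d) = fsub (B (True # Fs (2*Suc m))) (B (Fs (2*Suc m) @ [True]))"
    unfolding r2_def
    by (simp only: fmul_fadd_left fmul_fadd_right fmul_fsub_left fmul_fsub_right fmul_basis_basis) (simp add: fun_eq_iff fadd_def fsub_def)
  ultimately show ?case by simp
qed

lemma gen_comm: "fsub (B (b # Fs (2*n))) (B (Fs (2*n) @ [b])) \<in> fideal (wrels n :: 'k::comm_ring_1 fa set)"
proof (cases b)
  case True
  then show ?thesis using XJ_comm by simp
next
  case False
  then show ?thesis
    by (intro W.eqI[OF W.zero]) (simp add: fun_eq_iff fsub_def fzero_def replicate_append_same)
qed

lemma word_comm: "fsub (B (w @ Fs (2*n))) (B (Fs (2*n) @ w)) \<in> fideal (wrels n :: 'k::comm_ring_1 fa set)"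
proof (induction w)
  case Nil
  then show ?case by (intro W.eqI[OF W.zero]) (simp add: fun_eq_iff fsub_def fzero_def)
next
  case (Cons b w)
  have "fadd (fmul (B [b]) (fsub (B (w @ Fs (2*n))) (B (Fs (2*n) @ w))))
             (fmul (fsub (B (b # Fs (2*n))) (B (Fs (2*n) @ [b]))) (B w)) \<in> fideal (wrels n :: 'k fa set)"
    by (intro W.add W.lmul W.rmul Cons gen_comm) auto
  moreover have "fadd (fmul (B [b]) (fsub (B (w @ Fs (2*n))) (B (Fs (2*n) @ w))))
             (fmul (fsub (B (b # Fs (2*n))) (B (Fs (2*n) @ [b]))) (B w)) = 
     (fsub (B ((b # w) @ Fs (2*n))) (B (Fs (2*n) @ b # w)) :: 'k fa)"
    by (simp only: fmul_fadd_left fmul_fadd_right fmul_fsub_left fmul_fsub_right fmul_basis_basis) (simp add: fun_eq_iff fadd_def fsub_def)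
  ultimately show ?case by simp
qed

lemma J_central:
  assumes "p \<in> fa_carrier"
  shows "fsub (fmul p (fJ n)) (fmul (fJ n) p) \<in> fideal (wrels n :: 'k::comm_ring_1 fa set)"
  using assms
proof (induction rule: carrier_induct)
  case zero
  then show ?case by (intro W.eqI[OF W.zero]) (simp, simp add: fun_eq_iff fsub_def fzero_def)
next
  case (add p q)
  then show ?case
    by (intro W.eqI[OF W.add[OF add(3,4)]])
       (simp only: dist, simp add: fun_eq_iff fsub_def fadd_def)
next
  case (scale c p)
  then show ?case
    by (intro W.eqI[OF W.scale[OF scale(2), of c]])
       (simp only: dist, simp add: fun_eq_iff fsub_def fscale_def algebra_simps)
next
  case (basis w)
  then show ?case using word_comm[of w n] by (simp add: fJ_basis fmul_basis_basis)
qed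

lemma rep_shift[simp]: "replicate a x @ x # l = x # replicate a x @ l"
  by (induction a) auto

lemma J_idem:
  assumes "n \<ge> 1"
  shows "fsub (fJ n) (fmul (fJ n) (fJ n)) \<in> fideal (wrels n :: 'k::comm_ring_1 fa set)"
proof -
  obtain m where m: "2*n = Suc m" using assms by (cases "2*n") auto
  have "fsub fzero (fmul (B (Fs m)) (fsub (B (Fs (2*n+1))) (B [False]))) \<in> fideal (wrels n :: 'k fa set)"
    by (intro W.neg W.lmul W.gen wrels_basis) auto
  moreover have "Fs m @ Fs (Suc (Suc m)) = Fs (Suc m) @ Fs (Suc m)" 
    by (simp only: replicate_add[symmetric]) simp
  moreover have "Fs m @ [False] = Fs (Suc m)" by (induction m) auto
  ultimately show ?thesis unfolding fJ_basis m
    by (simp only: fmul_basis_basis dist) (simp add: fun_eq_iff fsub_def fzero_def)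
qed

lemmas cfacts = fmul_one_left fmul_one_right fmul_fzero_left fmul_fzero_right fmul_assoc dist

lemma conj1:
  assumes "x \<in> W1 n" "a \<in> fa_carrier"
  shows "in_mod (wI n) (W1 n) (fmul a x) \<and> in_mod (wI n) (W1 n) (fmul x a :: 'k::comm_ring_1 fa)"
proof -
  obtain p where p: "p \<in> fa_carrier" "x = fmul p (fJ n)" using assms(1) by (auto simp: W1_def)
  have 1: "fmul (fmul a p) (fJ n) \<in> W1 n" "fmul (fmul p a) (fJ n) \<in> W1 n"
    using p assms by (auto simp: W1_def)
  have "fsub (fmul a x) (fmul (fmul a p) (fJ n)) \<in> wI n"
    unfolding wI_def p(2) by (intro W.eqI[OF W.zero]) (simp add: fmul_assoc fun_eq_iff fsub_def fzero_def)
  moreover have "fsub (fmul x a) (fmul (fmul p a) (fJ n)) \<in> wI n"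
  proof -
    have "fmul p (fsub fzero (fsub (fmul a (fJ n)) (fmul (fJ n) a))) \<in> fideal (wrels n)"
      by (intro W.lmul W.neg J_central) (use p assms in auto)
    then show ?thesis unfolding wI_def p(2)
      by (rule W.eqI) (simp only: cfacts, simp add: fun_eq_iff fsub_def fzero_def)
  qed
  ultimately show ?thesis using 1 unfolding in_mod_def by blast
qed

lemma conj2:
  assumes "x \<in> W2 n" "a \<in> fa_carrier"
  shows "in_mod (wI n) (W2 n) (fmul a x) \<and> in_mod (wI n) (W2 n) (fmul x a :: 'k::comm_ring_1 fa)"
proof -
  obtain p where p: "p \<in> fa_carrier" "x = fmul p (fsub fone (fJ n))" using assms(1) by (auto simp: W2_def)
  have 1: "fmul (fmul a p) (fsub fone (fJ n)) \<in> W2 n" "fmul (fmul p a) (fsub fone (fJ n)) \<in> W2 n"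
    using p assms by (auto simp: W2_def)
  have "fsub (fmul a x) (fmul (fmul a p) (fsub fone (fJ n))) \<in> wI n"
    unfolding wI_def p(2) by (intro W.eqI[OF W.zero]) (simp add: fmul_assoc fun_eq_iff fsub_def fzero_def)
  moreover have "fsub (fmul x a) (fmul (fmul p a) (fsub fone (fJ n))) \<in> wI n"
  proof -
    have "fmul p (fsub (fmul a (fJ n)) (fmul (fJ n) a)) \<in> fideal (wrels n)"
      by (intro W.lmul J_central) (use p assms in auto)
    then show ?thesis unfolding wI_def p(2)
      by (rule W.eqI) (simp only: cfacts, simp add: fun_eq_iff fsub_def fzero_def)
  qed
  ultimately show ?thesis using 1 unfolding in_mod_def by blast
qed

lemma conj3:
  assumes n: "n \<ge> 1" and "x \<in> W1 n" "y \<in> W2 n" "fsub x y \<in> wI n"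
  shows "(x :: 'k::comm_ring_1 fa) \<in> wI n"
proof -
  obtain p where p: "p \<in> fa_carrier" "x = fmul p (fJ n)" using assms(2) by (auto simp: W1_def)
  obtain p' where p': "p' \<in> fa_carrier" "y = fmul p' (fsub fone (fJ n))" using assms(3) by (auto simp: W2_def)
  have "fadd (fmul (fsub x y) (fJ n)) (fadd (fmul p (fsub (fJ n) (fmul (fJ n) (fJ n))))
          (fmul p' (fsub (fJ n) (fmul (fJ n) (fJ n))))) \<in> fideal (wrels n)"
  proof (intro W.add)
    show "fmul (fsub x y) (fJ n) \<in> fideal (wrels n)"
      by (rule W.rmul) (use assms(4) in \<open>auto simp: wI_def fJ_def\<close>)
  qed (intro W.lmul J_idem[OF n] p p')+
  then show ?thesis unfolding wI_def p(2)
    by (rule W.eqI) (simp only: p' cfacts, simp add: fun_eq_iff fsub_def fadd_def)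
qed

lemma conj4:
  assumes "a \<in> fa_carrier"
  shows "\<exists>x\<in>W1 n. \<exists>y\<in>W2 n. fsub a (fadd x y) \<in> (wI n :: 'k::comm_ring_1 fa set)"
proof (intro bexI)
  show "fmul a (fJ n) \<in> W1 n" "fmul a (fsub fone (fJ n)) \<in> W2 n" using assms by (auto simp: W1_def W2_def)
  show "fsub a (fadd (fmul a (fJ n)) (fmul a (fsub fone (fJ n)))) \<in> wI n"
    unfolding wI_def by (intro W.eqI[OF W.zero]) (simp only: cfacts, simp add: fun_eq_iff fsub_def fadd_def fzero_def)
qed

inductive_set tspan :: "('k::comm_ring_1) fa2 set" where
  zero: "tzero \<in> tspan"
| tens: "a \<in> fa_carrier \<Longrightarrow> b \<in> fa_carrier \<Longrightarrow> ftensor a b \<in> tspan"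
| add: "s \<in> tspan \<Longrightarrow> t \<in> tspan \<Longrightarrow> tadd s t \<in> tspan"

lemma tmul_tensor: "tmul (ftensor a b) (ftensor c d) = ftensor (fmul a c) (fmul (b :: 'k::comm_ring_1 fa) d)"
  by (auto simp: fun_eq_iff tmul_def ftensor_def fmul_def sum_product mult_ac intro!: sum.cong)

lemma tmul_tadd_left: "tmul (tadd s t) r = tadd (tmul s r) (tmul t (r :: 'k::comm_ring_1 fa2))"
  by (auto simp: fun_eq_iff tmul_def tadd_def distrib_right sum.distrib)
lemma tmul_tadd_right: "tmul r (tadd s t) = tadd (tmul r s) (tmul r (t :: 'k::comm_ring_1 fa2))"
  by (auto simp: fun_eq_iff tmul_def tadd_def distrib_left sum.distrib)
lemma tmul_tsub_right: "tmul r (tsub s t) = tsub (tmul r s) (tmul r (t :: 'k::comm_ring_1 fa2))"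
  by (auto simp: fun_eq_iff tmul_def tsub_def right_diff_distrib sum_subtractf)
lemma tmul_tsub_left: "tmul (tsub s t) r = tsub (tmul s r) (tmul t (r :: 'k::comm_ring_1 fa2))"
  by (auto simp: fun_eq_iff tmul_def tsub_def left_diff_distrib sum_subtractf)
lemma tmul_tzero_left[simp]: "tmul tzero r = (tzero :: 'k::comm_ring_1 fa2)"
  by (auto simp: fun_eq_iff tmul_def tzero_def)
lemma tmul_tzero_right[simp]: "tmul r tzero = (tzero :: 'k::comm_ring_1 fa2)"
  by (auto simp: fun_eq_iff tmul_def tzero_def)

definition tscale :: "'k::comm_ring_1 \<Rightarrow> 'k fa2 \<Rightarrow> 'k fa2" where "tscale c t = (\<lambda>uv. c * t uv)"

lemma tmul_tscale_left: "tmul (tscale c s) r = tscale c (tmul s (r :: 'k::comm_ring_1 fa2))"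
  by (auto simp: fun_eq_iff tmul_def tscale_def sum_distrib_left mult.assoc)

lemma tone_tensor: "tone = ftensor fone (fone :: 'k::comm_ring_1 fa)"
  by (auto simp: fun_eq_iff tone_def ftensor_def fone_def)

lemma tspan_mul: "s \<in> tspan \<Longrightarrow> t \<in> tspan \<Longrightarrow> tmul s (t :: 'k::comm_ring_1 fa2) \<in> tspan"
proof (induction s rule: tspan.induct)
  case zero then show ?case by (simp add: tspan.zero)
next
  case (tens a b)
  from tens(3) show ?case
    by (induction t rule: tspan.induct)
       (auto simp: tmul_tensor tmul_tadd_right intro!: tspan.intros carrier_fmul tens(1,2))
next
  case (add s1 s2) then show ?case by (simp add: tmul_tadd_left tspan.add)
qed

lemma tspan_assoc:
  assumes "s \<in> tspan" "t \<in> tspan" "r \<in> tspan"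
  shows "tmul (tmul s t) r = tmul s (tmul t (r :: 'k::comm_ring_1 fa2))"
  using assms
proof (induction s rule: tspan.induct)
  case zero then show ?case by simp
next
  case (tens a b)
  from tens(3,4) show ?case
  proof (induction t rule: tspan.induct)
    case zero then show ?case by simp
  next
    case (tens c d)
    from tens(3) show ?case
      by (induction r rule: tspan.induct) (simp_all add: tmul_tensor fmul_assoc tmul_tadd_right)
  next
    case (add t1 t2) then show ?case by (simp add: tmul_tadd_left tmul_tadd_right)
  qed
next
  case (add s1 s2) then show ?case by (simp add: tmul_tadd_left)
qed

lemma tspan_carrier: "s \<in> tspan \<Longrightarrow> s \<in> (t_carrier :: 'k::comm_ring_1 fa2 set)"
proof (induction rule: tspan.induct)
  case zero then show ?case by (simp add: t_carrier_def tzero_def)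
next
  case (tens a b)
  have "{uv. ftensor a b uv \<noteq> 0} \<subseteq> {w. a w \<noteq> 0} \<times> {w. b w \<noteq> 0}" by (auto simp: ftensor_def)
  then show ?case using tens unfolding t_carrier_def fa_carrier_def by (auto intro: finite_subset)
next
  case (add s t)
  have "{uv. tadd s t uv \<noteq> 0} \<subseteq> {uv. s uv \<noteq> 0} \<union> {uv. t uv \<noteq> 0}" by (auto simp: tadd_def)
  then show ?case using add unfolding t_carrier_def by (auto intro: finite_subset)
qed

lemma delta_gen_span: "delta_gen b \<in> (tspan :: 'k::comm_ring_1 fa2 set)"
  by (auto simp: delta_gen_def intro!: tspan.intros)

lemma delta_word_span: "delta_word w \<in> (tspan :: 'k::comm_ring_1 fa2 set)"
  by (induction w) (auto simp: tone_tensor intro: tspan.intros tspan_mul delta_gen_span)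

lemma tmul_tone_left: "t \<in> tspan \<Longrightarrow> tmul tone t = (t :: 'k::comm_ring_1 fa2)"
  by (induction rule: tspan.induct) (simp_all add: tone_tensor tmul_tensor tmul_tadd_right)

lemma delta_word_append: "delta_word (w @ v) = tmul (delta_word w) (delta_word v :: 'k::comm_ring_1 fa2)"
  by (induction w) (simp_all add: tmul_tone_left delta_word_span tspan_assoc delta_gen_span)

lemma delta_word_Fs: "delta_word (Fs m) = ftensor (B (Fs m)) (B (Fs m) :: 'k::comm_ring_1 fa)"
  by (induction m) (simp_all add: tone_tensor fone_basis delta_gen_def tmul_tensor fgen_def fmul_basis_basis)


lemma fDelta_sum:
  assumes "finite S" "supp p \<subseteq> S"
  shows "fDelta p = (\<lambda>uv. \<Sum>w\<in>S. p w * delta_word w uv)"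
  unfolding fDelta_def
  by (rule ext, rule sum.mono_neutral_left) (use assms in auto)

lemma fDelta_add:
  assumes "p \<in> fa_carrier" "q \<in> fa_carrier"
  shows "fDelta (fadd p q) = tadd (fDelta p) (fDelta (q :: 'k::comm_ring_1 fa))"
proof -
  let ?S = "supp p \<union> supp q"
  have f: "finite ?S" using assms by (auto simp: fa_carrier_def)
  have "supp (fadd p q) \<subseteq> ?S" by (auto simp: fadd_def)
  then show ?thesis
    by (simp add: fDelta_sum[OF f] tadd_def fadd_def distrib_right sum.distrib)
qed

lemma fDelta_scale:
  assumes "p \<in> fa_carrier"
  shows "fDelta (fscale c p) = tscale c (fDelta (p :: 'k::comm_ring_1 fa))"
proof -
  have f: "finite (supp p)" using assms by (auto simp: fa_carrier_def)
  have "supp (fscale c p) \<subseteq> supp p" by (auto simp: fscale_def)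
  then show ?thesis
    by (simp add: fDelta_sum[OF f] tscale_def fscale_def sum_distrib_left mult.assoc)
qed

lemma fDelta_zero: "fDelta fzero = (tzero :: 'k::comm_ring_1 fa2)"
  by (simp add: fDelta_def fzero_def tzero_def fun_eq_iff)

lemma fDelta_basis: "fDelta (B w) = (delta_word w :: 'k::comm_ring_1 fa2)"
  by (simp add: fDelta_sum[of "{w}"] fbasis_def)

lemma fDelta_carrier:
  assumes "p \<in> fa_carrier"
  shows "fDelta p \<in> (t_carrier :: 'k::comm_ring_1 fa2 set)"
  using assms
proof (induction rule: carrier_induct)
  case zero then show ?case by (simp add: fDelta_zero t_carrier_def tzero_def)
next
  case (add p q)
  have "{uv. tadd (fDelta p) (fDelta q) uv \<noteq> 0} \<subseteq> {uv. fDelta p uv \<noteq> 0} \<union> {uv. fDelta q uv \<noteq> 0}"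
    by (auto simp: tadd_def)
  then show ?case using add by (auto simp: fDelta_add t_carrier_def intro: finite_subset)
next
  case (scale c p)
  have "{uv. tscale c (fDelta p) uv \<noteq> 0} \<subseteq> {uv. fDelta p uv \<noteq> 0}"
    by (auto simp: tscale_def)
  then show ?case using scale by (auto simp: fDelta_scale t_carrier_def intro: finite_subset)
next
  case (basis w) then show ?case by (simp add: fDelta_basis tspan_carrier delta_word_span)
qed

lemma tensor_map_id:
  assumes "t \<in> t_carrier"
  shows "tensor_map (\<lambda>x. x) t = (t :: 'k::comm_ring_1 fa2)"
proof
  fix uv :: "bool list \<times> bool list"
  have f: "finite {uv. t uv \<noteq> 0}" using assms by (simp add: t_carrier_def)
  have "tensor_map (\<lambda>x. x) t uv = (\<Sum>xy\<in>{uv. t uv \<noteq> 0}. if xy = uv then t uv else 0)"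
    unfolding tensor_map_def
    by (rule sum.cong) (auto simp: ftensor_def fbasis_def split: prod.splits)
  also have "\<dots> = t uv" using f by (simp add: sum.delta)
  finally show "tensor_map (\<lambda>x. x) t uv = t uv" .
qed

lemma tideal_scale: "t \<in> tideal I \<Longrightarrow> tscale c t \<in> tideal (I :: 'k::comm_ring_1 fa set)"
proof (induction rule: tideal.induct)
  case zero
  have "tscale c tzero = tzero" by (simp add: tscale_def tzero_def)
  then show ?case by (simp add: tideal.zero)
next
  case (left a b)
  have "tscale c (ftensor a b) = ftensor a (fscale c b)" by (auto simp: fun_eq_iff tscale_def ftensor_def fscale_def)
  then show ?case using left by (auto intro: tideal.left)
next
  case (right a b)
  have "tscale c (ftensor a b) = ftensor (fscale c a) b" by (auto simp: fun_eq_iff tscale_def ftensor_def fscale_def)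
  then show ?case using right by (auto intro: tideal.right)
next
  case (add s t)
  have "tscale c (tadd s t) = tadd (tscale c s) (tscale c t)" by (auto simp: fun_eq_iff tscale_def tadd_def algebra_simps)
  then show ?case using add by (auto intro: tideal.add)
qed

lemma tideal_sub: "s \<in> tideal I \<Longrightarrow> t \<in> tideal I \<Longrightarrow> tsub s t \<in> tideal (I :: 'k::comm_ring_1 fa set)"
proof -
  assume "s \<in> tideal I" "t \<in> tideal I"
  then have "tadd s (tscale (-1) t) \<in> tideal I" by (intro tideal.add tideal_scale)
  moreover have "tadd s (tscale (-1) t) = tsub s t" by (auto simp: fun_eq_iff tscale_def tadd_def tsub_def)
  ultimately show ?thesis by simp
qed

lemma (in idl) tspan_mul_left:
  assumes "s \<in> tspan" "a \<in> fideal R" "b \<in> fa_carrier"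
  shows "tmul s (ftensor a b) \<in> tideal (fideal R)" "tmul s (ftensor b a) \<in> tideal (fideal R)"
  using assms(1)
proof (induction rule: tspan.induct)
  case zero
  { case 1 show ?case by (simp add: tideal.zero) }
  { case 2 show ?case by (simp add: tideal.zero) }
next
  case (tens c d)
  { case 1 show ?case using tens assms by (auto simp: tmul_tensor intro!: tideal.left lmul) }
  { case 2 show ?case using tens assms by (auto simp: tmul_tensor intro!: tideal.right lmul) }
next
  case (add s t)
  { case 1 show ?case using add by (auto simp: tmul_tadd_left intro!: tideal.add) }
  { case 2 show ?case using add by (auto simp: tmul_tadd_left intro!: tideal.add) }
qed

lemma conj5:
  assumes n: "n \<ge> 1" and x: "x \<in> W1 n"
  shows "tsub (fDelta x) (tmul (fDelta x) (ftensor (fJ n) (fJ n))) \<in> tideal (wI n :: 'k::comm_ring_1 fa set)"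
proof -
  obtain p where p: "p \<in> fa_carrier" "x = fmul p (fJ n)" using x by (auto simp: W1_def)
  have Jc: "fJ n \<in> (fa_carrier :: 'k fa set)" by (simp add: fJ_basis)
  let ?JJ = "ftensor (fJ n) (fJ n) :: 'k fa2"
  have "tsub (fDelta (fmul p (fJ n))) (tmul (fDelta (fmul p (fJ n))) ?JJ) \<in> tideal (wI n)"
    using p(1)
  proof (induction rule: carrier_induct)
    case zero
    have "tsub tzero tzero = (tzero :: 'k fa2)" by (simp add: tsub_def tzero_def)
    then show ?case by (simp add: fDelta_zero tideal.zero)
  next
    case (add p q)
    have "tsub (fDelta (fmul (fadd p q) (fJ n))) (tmul (fDelta (fmul (fadd p q) (fJ n))) ?JJ)
       = tadd (tsub (fDelta (fmul p (fJ n))) (tmul (fDelta (fmul p (fJ n))) ?JJ))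
              (tsub (fDelta (fmul q (fJ n))) (tmul (fDelta (fmul q (fJ n))) ?JJ))"
      using add(1,2) Jc
      by (simp add: fmul_fadd_left fDelta_add tmul_tadd_left) (simp add: fun_eq_iff tadd_def tsub_def)
    then show ?case using add(3,4) by (simp add: tideal.add)
  next
    case (scale c p)
    have "tsub (fDelta (fmul (fscale c p) (fJ n))) (tmul (fDelta (fmul (fscale c p) (fJ n))) ?JJ)
       = tscale c (tsub (fDelta (fmul p (fJ n))) (tmul (fDelta (fmul p (fJ n))) ?JJ))"
      using scale(1) Jc
      by (simp add: fmul_fscale_left fDelta_scale tmul_tscale_left) (simp add: fun_eq_iff tscale_def tsub_def algebra_simps)
    then show ?case using scale(2) by (simp add: tideal_scale)
  next
    case (basis w)
    define dw :: "'k fa2" where "dw = delta_word w"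
    define e :: "'k fa" where "e = fsub (fJ n) (fmul (fJ n) (fJ n))"
    have e: "e \<in> fideal (wrels n)" unfolding e_def by (rule J_idem[OF n])
    have dws: "dw \<in> tspan" by (simp add: dw_def delta_word_span)
    have JJs: "?JJ \<in> tspan" using Jc by (intro tspan.tens)
    have 1: "fDelta (fmul (B w) (fJ n)) = tmul dw ?JJ"
      by (simp add: fJ_basis fmul_basis_basis fDelta_basis delta_word_append delta_word_Fs dw_def)
    have 2: "tmul (tmul dw ?JJ) ?JJ = tmul dw (ftensor (fmul (fJ n) (fJ n)) (fmul (fJ n) (fJ n)))"
      by (simp add: tspan_assoc dws JJs tmul_tensor)
    have 3: "tsub ?JJ (ftensor (fmul (fJ n) (fJ n)) (fmul (fJ n) (fJ n)))
        = tadd (ftensor e (fJ n)) (ftensor (fmul (fJ n) (fJ n)) e)"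
      by (simp add: fun_eq_iff e_def tsub_def tadd_def ftensor_def fsub_def algebra_simps)
    have "tadd (tmul dw (ftensor e (fJ n))) (tmul dw (ftensor (fmul (fJ n) (fJ n)) e)) \<in> tideal (wI n)"
      unfolding wI_def using dws e Jc by (intro tideal.add W.tspan_mul_left) auto
    then show ?case
      by (simp add: 1 2 tmul_tsub_right[symmetric] 3 tmul_tadd_right)
  qed
  then show ?thesis using p by simp
qed

lemma hI_mul_J:
  assumes n: "n \<ge> 1" and h: "h \<in> fideal (hrels n)"
  shows "fmul h (fJ n) \<in> fideal (wrels n :: 'k::comm_ring_1 fa set)"
  using h
proof (induction rule: fideal.induct)
  case (gen r)
  then consider "r = fsub (fJ n) fone" | "r \<in> wrels n" by (auto simp: hrels_def wrels_def fJ_def)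
  then show ?case
  proof cases
    case 1
    have "fsub fzero (fsub (fJ n) (fmul (fJ n) (fJ n))) \<in> fideal (wrels n :: 'k fa set)"
      by (intro W.neg J_idem n)
    then show ?thesis unfolding 1
      by (rule W.eqI) (simp only: dist fmul_one_left, simp add: fun_eq_iff fsub_def fzero_def)
  next
    case 2 then show ?thesis by (intro W.rmul W.gen) (auto simp: fJ_basis)
  qed
next
  case zero then show ?case by (simp add: W.zero)
next
  case (add x y) then show ?case by (simp add: fmul_fadd_left W.add)
next
  case (mult x a b)
  have xc: "x \<in> fa_carrier" using mult(1) by (rule H.carrier)
  have Jc: "fJ n \<in> (fa_carrier :: 'k fa set)" by (simp add: fJ_basis)
  have "fadd (fmul a (fmul (fmul x (fJ n)) b)) (fmul (fmul a x) (fsub (fmul b (fJ n)) (fmul (fJ n) b))) \<in> fideal (wrels n)"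
  proof (rule W.add)
    show "fmul a (fmul (fmul x (fJ n)) b) \<in> fideal (wrels n)" using mult by (intro W.mult) auto
    show "fmul (fmul a x) (fsub (fmul b (fJ n)) (fmul (fJ n) b)) \<in> fideal (wrels n)"
      using mult xc by (intro W.lmul J_central) auto
  qed
  then show ?case
    by (rule W.eqI) (simp only: cfacts, simp add: fun_eq_iff fsub_def fadd_def)
qed

lemma wI_sub_hI:
  assumes "p \<in> fideal (wrels n)"
  shows "p \<in> fideal (hrels n :: 'k::comm_ring_1 fa set)"
  using assms
proof (induction rule: fideal.induct)
  case (gen r)
  then consider "r = fsub (fpow fG (2*n+1)) fG" | "r \<in> hrels n" by (auto simp: hrels_def wrels_def)
  then show ?case
  proof cases
    case 1
    have "fmul fG (fsub (fpow fG (2*n)) fone) \<in> fideal (hrels n :: 'k fa set)"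
      by (intro H.lmul H.gen) (auto simp: hrels_def)
    then show ?thesis unfolding 1
      by (rule H.eqI) (simp only: dist fmul_one_right, simp)
  next
    case 2 then show ?thesis by (rule H.gen)
  qed
qed (auto intro: fideal.intros)

definition chi :: "'k::comm_ring_1 fa \<Rightarrow> 'k poly" where
  "chi p = (if p \<in> fa_carrier then Abs_poly (\<lambda>i. p (replicate i True)) else 0)"
definition psi :: "'k::comm_ring_1 poly \<Rightarrow> 'k fa" where
  "psi f = (\<lambda>w. if (\<forall>b\<in>set w. b) then coeff f (length w) else 0)"

lemma inj_rep: "inj (\<lambda>i. replicate i x)"
  by (rule injI) (metis length_replicate)

lemma coeff_chi:
  assumes "p \<in> fa_carrier"
  shows "coeff (chi p) i = p (replicate i True)"
proof -
  have "finite ((\<lambda>i. replicate i True) -` supp p)"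
    using assms by (intro finite_vimageI inj_rep) (simp add: fa_carrier_def)
  then have "\<forall>\<^sub>\<infinity> i. p (replicate i True) = 0"
    by (simp add: eventually_cofinite vimage_def)
  then show ?thesis using assms by (simp add: chi_def Abs_poly_inverse)
qed

lemma chi_add: "p \<in> fa_carrier \<Longrightarrow> q \<in> fa_carrier \<Longrightarrow> chi (fadd p q) = chi p + chi (q :: 'k::comm_ring_1 fa)"
  by (rule poly_eqI) (simp add: coeff_chi, simp add: fadd_def)
lemma chi_sub: "p \<in> fa_carrier \<Longrightarrow> q \<in> fa_carrier \<Longrightarrow> chi (fsub p q) = chi p - chi (q :: 'k::comm_ring_1 fa)"
  by (rule poly_eqI) (simp add: coeff_chi, simp add: fsub_def)
lemma chi_scale: "p \<in> fa_carrier \<Longrightarrow> chi (fscale c p) = smult c (chi (p :: 'k::comm_ring_1 fa))"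
  by (rule poly_eqI) (simp add: coeff_chi, simp add: fscale_def)
lemma chi_zero[simp]: "chi (fzero :: 'k::comm_ring_1 fa) = 0"
  by (rule poly_eqI) (simp add: coeff_chi, simp add: fzero_def)
lemma chi_mul:
  assumes "p \<in> fa_carrier" "q \<in> fa_carrier"
  shows "chi (fmul p q) = chi p * chi (q :: 'k::comm_ring_1 fa)"
proof (rule poly_eqI)
  fix i
  show "coeff (chi (fmul p q)) i = coeff (chi p * chi q) i"
    using assms by (simp add: coeff_chi coeff_mult, simp add: fmul_def)
qed
lemma rep_iff: "(w = replicate i True) = ((\<forall>b\<in>set w. b) \<and> length w = i)"
  by (auto intro: replicate_eqI)

lemma chi_basis: "chi (B w :: 'k::comm_ring_1 fa) = (if \<forall>b\<in>set w. b then monom 1 (length w) else 0)"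
proof (rule poly_eqI)
  fix i
  have "coeff (chi (B w :: 'k fa)) i = (if w = replicate i True then 1 else 0)"
    by (simp add: coeff_chi, simp add: fbasis_def eq_commute)
  then show "coeff (chi (B w :: 'k fa)) i = coeff (if \<forall>b\<in>set w. b then monom 1 (length w) else 0) i"
    unfolding rep_iff by (auto simp: coeff_monom)
qed

lemma chi_one[simp]: "chi (fone :: 'k::comm_ring_1 fa) = 1"
  by (simp add: fone_basis chi_basis)

lemma psi_carrier[simp]: "psi f \<in> fa_carrier"
proof -
  have "supp (psi f) \<subseteq> (\<lambda>i. replicate i True) ` {..degree f}"
  proof
    fix w assume "w \<in> supp (psi f)"
    then have "\<forall>b\<in>set w. b" "coeff f (length w) \<noteq> 0" by (auto simp: psi_def split: if_splits)
    then show "w \<in> (\<lambda>i. replicate i True) ` {..degree f}"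
      by (auto intro!: image_eqI[of _ _ "length w"] le_degree replicate_length_same[symmetric])
  qed
  then show ?thesis unfolding fa_carrier_def by (auto intro: finite_subset)
qed

lemma chi_psi[simp]: "chi (psi f) = f"
  by (rule poly_eqI) (simp add: coeff_chi, simp add: psi_def)

lemma psi_mult: "psi (f * g) = fmul (psi f) (psi (g :: 'k::comm_ring_1 poly))"
proof
  fix w :: "bool list"
  show "psi (f * g) w = fmul (psi f) (psi g) w"
  proof (cases "\<forall>b\<in>set w. b")
    case True
    then have "\<forall>b\<in>set (take i w). b" "\<forall>b\<in>set (drop i w). b" for i
      by (auto dest: in_set_takeD in_set_dropD)
    then have "fmul (psi f) (psi g) w = (\<Sum>i\<le>length w. coeff f i * coeff g (length w - i))"
      unfolding fmul_def psi_def using True by (intro sum.cong) (auto simp: min_def)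
    moreover have "psi (f * g) w = coeff (f * g) (length w)" using True by (auto simp: psi_def)
    ultimately show ?thesis by (simp add: coeff_mult)
  next
    case False
    have "\<not> ((\<forall>b\<in>set (take i w). b) \<and> (\<forall>b\<in>set (drop i w). b))" for i
      using False by (metis Un_iff append_take_drop_id set_append)
    then have "fmul (psi f) (psi g) w = 0" unfolding fmul_def psi_def
      by (intro sum.neutral) auto
    moreover have "psi (f * g) w = 0" using False by (auto simp: psi_def)
    ultimately show ?thesis by simp
  qed
qed

lemma psi_monom: "psi (monom 1 m) = B (replicate m True)"
  by (auto simp: fun_eq_iff psi_def fbasis_def coeff_monom rep_iff)

lemma psi_zero[simp]: "psi 0 = fzero"
  by (simp add: fun_eq_iff psi_def fzero_def)

lemma Qeq: "monom 1 2 - 1 = ([:-1, 0, 1:] :: 'k::comm_ring_1 poly)"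
  by (simp add: poly_eq_iff coeff_monom coeff_pCons split: nat.split)

lemma psi_Q: "psi [:-1, 0, 1:] = fsub (B [True, True]) (fone :: 'k::comm_ring_1 fa)"
proof
  fix w :: "bool list"
  show "psi [:-1, 0, 1:] w = fsub (B [True, True]) (fone :: 'k fa) w"
  proof (cases "\<forall>b\<in>set w. b")
    case True
    then have w: "w = replicate (length w) True" using rep_iff by blast
    show ?thesis
    proof (cases "length w")
      case 0 then show ?thesis using True by (simp add: psi_def fsub_def fbasis_def fone_def)
    next
      case (Suc k)
      then show ?thesis
      proof (cases k)
        case 0 then show ?thesis using True Suc w by (simp add: psi_def fsub_def fbasis_def fone_def)
      next
        case (Suc k')
        then show ?thesis using True \<open>length w = Suc k\<close> w
          by (cases k') (simp_all add: psi_def fsub_def fbasis_def fone_def)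
      qed
    qed
  next
    case False
    then have "w \<noteq> []" "w \<noteq> [True, True]" by auto
    moreover have "psi [:-1, 0, 1:] w = (0::'k)" using False by (auto simp: psi_def)
    ultimately show ?thesis by (simp add: fsub_def fbasis_def fone_def)
  qed
qed

lemma psi_add: "psi (f + g) = fadd (psi f) (psi g)"
  by (auto simp: fun_eq_iff psi_def fadd_def)
lemma psi_smult: "psi (smult c f) = fscale c (psi f)"
  by (auto simp: fun_eq_iff psi_def fscale_def)

lemma wrels_cases:
  assumes "r \<in> (wrels n :: 'k::comm_ring_1 fa set)"
  shows "r = fsub (B (Fs (2*n+1))) (B [False]) \<or> r = fadd (B [False, True]) (B [True, False])
       \<or> r = fsub (B [True,True]) (fsub fone (B [False,False]))"
  using assms by (simp add: wrels_def fpow_G fgen_def fmul_basis_basis fpow_G')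

lemma chi_wI:
  assumes "p \<in> fideal (wrels n)"
  shows "[:-1, 0, 1:] dvd chi (p :: 'k::comm_ring_1 fa)"
  using assms
proof (induction rule: fideal.induct)
  case (gen r)
  from wrels_cases[OF gen] show ?case
    by (elim disjE) (simp_all add: chi_sub chi_add chi_basis Qeq[symmetric] numeral_2_eq_2)
next
  case zero then show ?case by simp
next
  case (add x y) then show ?case by (simp add: chi_add W.carrier)
next
  case (mult x a b)
  then show ?case by (simp add: chi_mul W.carrier)
qed

lemma chi_K: "n \<ge> 1 \<Longrightarrow> chi (fsub fone (fJ n) :: 'k::comm_ring_1 fa) = 1"
  by (simp add: chi_sub fJ_basis chi_basis)

lemma normal_form:
  assumes n: "n \<ge> 1" and p: "p \<in> fa_carrier"
  shows "fsub (fmul p (fsub fone (fJ n))) (fmul (psi (chi p)) (fsub fone (fJ n)))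
           \<in> fideal (wrels n :: 'k::comm_ring_1 fa set)"
  using p
proof (induction rule: carrier_induct)
  case zero
  then show ?case by (intro W.eqI[OF W.zero]) (simp, simp add: fun_eq_iff fsub_def fzero_def)
next
  case (add p q)
  then show ?case
    by (intro W.eqI[OF W.add[OF add(3,4)]])
       (simp only: chi_add psi_add dist, simp add: fun_eq_iff fsub_def fadd_def)
next
  case (scale c p)
  then show ?case
    by (intro W.eqI[OF W.scale[OF scale(2), of c]])
       (simp only: chi_scale psi_smult dist, simp add: fun_eq_iff fsub_def fscale_def algebra_simps)
next
  case (basis w)
  show ?case
  proof (cases "\<forall>b\<in>set w. b")
    case True
    then have "psi (chi (B w)) = (B w :: 'k fa)"
      using rep_iff[of w "length w"] by (auto simp: chi_basis psi_monom)
    then show ?thesis by (intro W.eqI[OF W.zero]) (simp add: fun_eq_iff fsub_def fzero_def)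
  next
    case False
    then have "False \<in> set w" by auto
    then obtain u v where w: "w = u @ False # v" by (auto dest: split_list)
    have mem: "fsub fzero (fadd (fmul (B (u @ [False])) (fsub (fmul (B v) (fJ n)) (fmul (fJ n) (B v))))
                           (fmul (B u) (fmul (fsub (B (Fs (2*n+1))) (B [False])) (B v))))
          \<in> fideal (wrels n :: 'k fa set)"
      by (intro W.neg W.add W.lmul W.mult J_central W.gen wrels_basis) auto
    have c0: "chi (B w :: 'k fa) = 0" using False by (simp add: chi_basis)
    have eq: "fsub (fmul (B w) (fsub fone (fJ n))) (fmul fzero (fsub fone (fJ n))) =
       fsub fzero (fadd (fmul (B (u @ [False])) (fsub (fmul (B v) (fJ n)) (fmul (fJ n) (B v))))
                           (fmul (B u) (fmul (fsub (B (Fs (2*n+1))) (B [False])) (B v))))"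
      unfolding w fJ_basis
      apply (simp only: dist fmul_basis_basis fmul_one_right fmul_fzero_left)
      apply (simp add: fun_eq_iff fsub_def fadd_def fzero_def)
      done
    show ?thesis by (simp only: c0 psi_zero eq mem)
  qed
qed

lemma XXK:
  "fmul (psi [:-1, 0, 1:]) (fsub fone (fJ n)) \<in> fideal (wrels n :: 'k::comm_ring_1 fa set)"
proof -
  have mem: "fadd (fmul (fsub (B [True,True]) (fsub fone (B [False,False]))) (fsub fone (fJ n)))
              (fmul (B [False]) (fsub (B (Fs (2*n+1))) (B [False]))) \<in> fideal (wrels n :: 'k fa set)"
    by (intro W.add W.rmul W.lmul W.gen wrels_basis) (auto simp: fJ_basis)
  have eq: "fadd (fmul (fsub (B [True,True]) (fsub fone (B [False,False]))) (fsub fone (fJ n)))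
              (fmul (B [False]) (fsub (B (Fs (2*n+1))) (B [False])))
        = fmul (psi [:-1, 0, 1:]) (fsub fone (fJ n) :: 'k fa)"
    unfolding psi_Q fJ_basis
    apply (simp only: dist fmul_basis_basis fmul_one_right fmul_one_left)
    apply (simp add: fun_eq_iff fsub_def fadd_def)
    done
  show ?thesis using mem by (simp only: eq)
qed

lemma chi_inj:
  assumes n: "n \<ge> 1" and x: "x \<in> W2 n" and d: "[:-1, 0, 1:] dvd chi x"
  shows "x \<in> wI n"
proof -
  let ?K = "fsub fone (fJ n) :: 'k::comm_ring_1 fa"
  obtain p where p: "p \<in> fa_carrier" "x = fmul p ?K" using x by (auto simp: W2_def)
  have Kc: "?K \<in> fa_carrier" by (simp add: fJ_basis)
  have "chi x = chi p" using chi_mul[OF p(1) Kc] chi_K[OF n] p(2) by (metis mult_1_right)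
  with d obtain g where g: "chi p = g * [:-1, 0, 1:]" by (auto elim!: dvdE simp: mult.commute)
  have 1: "fsub x (fmul (psi (chi p)) ?K) \<in> fideal (wrels n)"
    using normal_form[OF n p(1)] p(2) by simp
  have 2: "fmul (psi (chi p)) ?K \<in> fideal (wrels n)"
    unfolding g psi_mult fmul_assoc by (intro W.lmul XXK) auto
  have "fadd (fsub x (fmul (psi (chi p)) ?K)) (fmul (psi (chi p)) ?K) \<in> fideal (wrels n)"
    by (rule W.add[OF 1 2])
  moreover have "fadd (fsub x (fmul (psi (chi p)) ?K)) (fmul (psi (chi p)) ?K) = x"
    by (simp add: fun_eq_iff fsub_def fadd_def)
  ultimately show ?thesis by (simp add: wI_def)
qed

lemma phi_inj:
  assumes n: "n \<ge> 1" and x: "x \<in> W1 n" and h: "x \<in> hI n"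
  shows "(x :: 'k::comm_ring_1 fa) \<in> wI n"
proof -
  obtain p where p: "p \<in> fa_carrier" "x = fmul p (fJ n)" using x by (auto simp: W1_def)
  have "fadd (fmul x (fJ n)) (fmul p (fsub (fJ n) (fmul (fJ n) (fJ n)))) \<in> fideal (wrels n)"
    by (intro W.add hI_mul_J[OF n] W.lmul J_idem[OF n]) (use h p in \<open>auto simp: hI_def\<close>)
  moreover have "fadd (fmul x (fJ n)) (fmul p (fsub (fJ n) (fmul (fJ n) (fJ n)))) = x"
    unfolding p(2) by (simp only: cfacts) (simp add: fun_eq_iff fsub_def fadd_def)
  ultimately show ?thesis by (simp add: wI_def)
qed

theorem proposition5p1:
  fixes n :: nat and q :: "'k::field_char_0"
  assumes "alg_closed_field TYPE('k)"
    and "n \<ge> 1"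
    and "q ^ (2*n) = 1" and "\<forall>m. 0 < m \<and> m < 2*n \<longrightarrow> q ^ m \<noteq> 1"
  shows
    "(\<forall>x\<in>(W1 n :: 'k fa set). \<forall>a\<in>fa_carrier.
        in_mod (wI n) (W1 n) (fmul a x) \<and> in_mod (wI n) (W1 n) (fmul x a))
   \<and> (\<forall>x\<in>(W2 n :: 'k fa set). \<forall>a\<in>fa_carrier.
        in_mod (wI n) (W2 n) (fmul a x) \<and> in_mod (wI n) (W2 n) (fmul x a))
   \<and> (\<forall>x\<in>(W1 n :: 'k fa set). \<forall>y\<in>W2 n. fsub x y \<in> wI n \<longrightarrow> x \<in> wI n)
   \<and> (\<forall>a\<in>(fa_carrier :: 'k fa set). \<exists>x\<in>W1 n. \<exists>y\<in>W2 n. fsub a (fadd x y) \<in> wI n)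
   \<and> (\<forall>x\<in>(W1 n :: 'k fa set).
        tsub (fDelta x) (tmul (fDelta x) (ftensor (fJ n) (fJ n))) \<in> tideal (wI n))
   \<and> (\<exists>\<phi> :: 'k fa \<Rightarrow> 'k fa.
        (\<forall>p\<in>fa_carrier. \<phi> p \<in> fa_carrier) \<and> fa_linear \<phi> fadd fscale
      \<and> (\<forall>p\<in>wI n. \<phi> p \<in> hI n)
      \<and> (\<forall>x\<in>W1 n. \<phi> x \<in> hI n \<longrightarrow> x \<in> wI n)
      \<and> (\<forall>h\<in>fa_carrier. \<exists>x\<in>W1 n. fsub (\<phi> x) h \<in> hI n)
      \<and> fsub (\<phi> (fJ n)) fone \<in> hI n
      \<and> (\<forall>x\<in>W1 n. \<forall>y\<in>W1 n. fsub (\<phi> (fmul x y)) (fmul (\<phi> x) (\<phi> y)) \<in> hI n)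
      \<and> (\<forall>x\<in>W1 n. feps (\<phi> x) = feps x)
      \<and> (\<forall>x\<in>W1 n. tsub (tensor_map \<phi> (fDelta x)) (fDelta (\<phi> x)) \<in> tideal (hI n)))
   \<and> (\<exists>\<chi> :: 'k fa \<Rightarrow> 'k poly.
        fa_linear \<chi> (+) smult
      \<and> (\<forall>p\<in>wI n. [:-1, 0, 1:] dvd \<chi> p)
      \<and> (\<forall>x\<in>W2 n. [:-1, 0, 1:] dvd \<chi> x \<longrightarrow> x \<in> wI n)
      \<and> (\<forall>f. \<exists>x\<in>W2 n. [:-1, 0, 1:] dvd \<chi> x - f)
      \<and> [:-1, 0, 1:] dvd \<chi> (fsub fone (fJ n)) - 1
      \<and> (\<forall>x\<in>W2 n. \<forall>y\<in>W2 n. [:-1, 0, 1:] dvd \<chi> (fmul x y) - \<chi> x * \<chi> y))"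
proof -
  note n = assms(2)
  have W1c: "x \<in> fa_carrier" if "x \<in> W1 n" for x :: "'k fa"
    using that by (auto simp: W1_def fJ_basis)
  have W2c: "x \<in> fa_carrier" if "x \<in> W2 n" for x :: "'k fa"
    using that by (auto simp: W2_def fJ_basis)
  have Jc: "fJ n \<in> (fa_carrier :: 'k fa set)" by (simp add: fJ_basis)
  have Kc: "fsub fone (fJ n) \<in> (fa_carrier :: 'k fa set)" by (simp add: fJ_basis)
  have JH: "fsub (fJ n) fone \<in> (hI n :: 'k fa set)"
    unfolding hI_def by (rule H.gen) (simp add: hrels_def fJ_def)
  have P1: "\<exists>\<phi> :: 'k fa \<Rightarrow> 'k fa.
        (\<forall>p\<in>fa_carrier. \<phi> p \<in> fa_carrier) \<and> fa_linear \<phi> fadd fscale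
      \<and> (\<forall>p\<in>wI n. \<phi> p \<in> hI n)
      \<and> (\<forall>x\<in>W1 n. \<phi> x \<in> hI n \<longrightarrow> x \<in> wI n)
      \<and> (\<forall>h\<in>fa_carrier. \<exists>x\<in>W1 n. fsub (\<phi> x) h \<in> hI n)
      \<and> fsub (\<phi> (fJ n)) fone \<in> hI n
      \<and> (\<forall>x\<in>W1 n. \<forall>y\<in>W1 n. fsub (\<phi> (fmul x y)) (fmul (\<phi> x) (\<phi> y)) \<in> hI n)
      \<and> (\<forall>x\<in>W1 n. feps (\<phi> x) = feps x)
      \<and> (\<forall>x\<in>W1 n. tsub (tensor_map \<phi> (fDelta x)) (fDelta (\<phi> x)) \<in> tideal (hI n))"
  proof (intro exI[of _ "\<lambda>x. x"] conjI ballI impI)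
    show "fa_linear (\<lambda>x. x) fadd fscale" by (simp add: fa_linear_def)
  next
    fix p :: "'k fa" assume "p \<in> wI n" then show "p \<in> hI n"
      unfolding wI_def hI_def by (rule wI_sub_hI)
  next
    fix x :: "'k fa" assume "x \<in> W1 n" "x \<in> hI n" then show "x \<in> wI n" by (rule phi_inj[OF n])
  next
    fix h :: "'k fa" assume h: "h \<in> fa_carrier"
    show "\<exists>x\<in>W1 n. fsub x h \<in> hI n"
    proof (intro bexI)
      show "fmul h (fJ n) \<in> W1 n" using h by (auto simp: W1_def)
      have "fmul h (fsub (fJ n) fone) \<in> hI n" using JH h unfolding hI_def by (intro H.lmul)
      then show "fsub (fmul h (fJ n)) h \<in> hI n"
        by (simp only: dist fmul_one_right)
    qed
  next
    show "fsub (fJ n) fone \<in> (hI n :: 'k fa set)" by (rule JH)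
  next
    fix x y :: "'k fa"
    have "fsub (fmul x y) (fmul x y) = fzero" by (simp add: fun_eq_iff fsub_def fzero_def)
    then show "fsub (fmul x y) (fmul x y) \<in> hI n" by (simp add: hI_def H.zero)
  next
    fix x :: "'k fa" assume x: "x \<in> W1 n"
    have "tsub (fDelta x) (fDelta x) = tzero" by (simp add: fun_eq_iff tsub_def tzero_def)
    then show "tsub (tensor_map (\<lambda>x. x) (fDelta x)) (fDelta x) \<in> tideal (hI n)"
      using tensor_map_id[OF fDelta_carrier[OF W1c[OF x]]] by (simp add: tideal.zero)
  qed simp_all
  have P2: "\<exists>\<chi> :: 'k fa \<Rightarrow> 'k poly.
        fa_linear \<chi> (+) smult
      \<and> (\<forall>p\<in>wI n. [:-1, 0, 1:] dvd \<chi> p)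
      \<and> (\<forall>x\<in>W2 n. [:-1, 0, 1:] dvd \<chi> x \<longrightarrow> x \<in> wI n)
      \<and> (\<forall>f. \<exists>x\<in>W2 n. [:-1, 0, 1:] dvd \<chi> x - f)
      \<and> [:-1, 0, 1:] dvd \<chi> (fsub fone (fJ n)) - 1
      \<and> (\<forall>x\<in>W2 n. \<forall>y\<in>W2 n. [:-1, 0, 1:] dvd \<chi> (fmul x y) - \<chi> x * \<chi> y)"
  proof (intro exI[of _ chi] conjI ballI impI allI)
    show "fa_linear chi (+) smult" by (simp add: fa_linear_def chi_add chi_scale)
  next
    fix p :: "'k fa" assume "p \<in> wI n" then show "[:-1, 0, 1:] dvd chi p"
      unfolding wI_def by (rule chi_wI)
  next
    fix x :: "'k fa" assume "x \<in> W2 n" "[:-1, 0, 1:] dvd chi x" then show "x \<in> wI n"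
      by (rule chi_inj[OF n])
  next
    fix f :: "'k poly"
    show "\<exists>x\<in>W2 n. [:-1, 0, 1:] dvd chi x - f"
    proof (intro bexI)
      show "fmul (psi f) (fsub fone (fJ n)) \<in> W2 n" by (auto simp: W2_def)
      have "chi (fmul (psi f) (fsub fone (fJ n))) = f"
        using chi_mul[OF psi_carrier Kc, of f] chi_K[OF n] by (metis chi_psi mult_1_right)
      then show "[:-1, 0, 1:] dvd chi (fmul (psi f) (fsub fone (fJ n))) - f" by simp
    qed
  next
    show "[:-1, 0, 1:] dvd chi (fsub fone (fJ n) :: 'k fa) - 1" unfolding chi_K[OF n] by simp
  next
    fix x y :: "'k fa" assume "x \<in> W2 n" "y \<in> W2 n"
    then show "[:-1, 0, 1:] dvd chi (fmul x y) - chi x * chi y" by (simp add: chi_mul W2c)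
  qed
  show ?thesis
  proof (intro conjI)
    show "\<forall>x\<in>(W1 n :: 'k fa set). \<forall>a\<in>fa_carrier.
        in_mod (wI n) (W1 n) (fmul a x) \<and> in_mod (wI n) (W1 n) (fmul x a)"
      using conj1 by blast
    show "\<forall>x\<in>(W2 n :: 'k fa set). \<forall>a\<in>fa_carrier.
        in_mod (wI n) (W2 n) (fmul a x) \<and> in_mod (wI n) (W2 n) (fmul x a)"
      using conj2 by blast
    show "\<forall>x\<in>(W1 n :: 'k fa set). \<forall>y\<in>W2 n. fsub x y \<in> wI n \<longrightarrow> x \<in> wI n"
      using conj3[OF n] by blast
    show "\<forall>a\<in>(fa_carrier :: 'k fa set). \<exists>x\<in>W1 n. \<exists>y\<in>W2 n. fsub a (fadd x y) \<in> wI n"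
      using conj4 by blast
    show "\<forall>x\<in>(W1 n :: 'k fa set).
        tsub (fDelta x) (tmul (fDelta x) (ftensor (fJ n) (fJ n))) \<in> tideal (wI n)"
      using conj5[OF n] by blast
  qed (rule P1, rule P2)
qed

end
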